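(* Consider the resilient constrained consensus algorithm described in the context, with $\bigcap_{i\in\mathcal H}\mathcal X_i=\{x^*\}$. For $i\in\mathcal H$ and time $t$, define $$e_i(t)=\sum_{j\in\mathcal F_i(t)}(x_i(t)-x_{ji}(t))-\sum_{j\in\mathcal H_i\setminus\mathcal L_i(t)}(x_i(t)-x_{ji}(t))$$ and $$S_i(t)=\tfrac12\sum_{j\in\mathcal H}\|x_i(t)-x_j(t)\|^2+\langle x_i(t)-x^*,e_i(t)\rangle.$$ Then for every $i\in\mathcal H$ and every $t$, $$S_i(t)\ge\tfrac12\sum_{j\in\mathcal L_i(t)}\|x_i(t)-x_j(t)\|^2-2\sum_{j\in\mathcal H_i\setminus\mathcal L_i(t)}\|x_i(t)-x^*\|^2,$$ and $$\sum_{i\in\mathcal H}\phi_i(t)=\sum_{i\in\mathcal H}S_i(t).$$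
   Context: Setting: There are $n$ agents $\mathcal N=\{1,\dots,n\}$ on a complete communication graph. A known integer $f\ge0$ is given. The agents are partitioned into normal agents $\mathcal H$ and Byzantine agents $\mathcal F$ with $|\mathcal F|\le f$. Each $i\in\mathcal H$ has a closed convex $\mathcal X_i\subseteq\mathbb R^m$. Algorithm: normal agent $i$ has state $x_i(t)\in\mathbb R^m$ and at time $t$ receives $x_{ji}(t)$ from each $j\ne i$. If $j\in\mathcal H$, then $x_{ji}(t)=x_j(t)$. If $j\in\mathcal F$, the value is arbitrary and may differ per recipient. Agent $i$ discards the $f$ received vectors with largest $\|x_i(t)-x_{ji}(t)\|$, with ties broken arbitrarily. The remaining $n-f-1$ senders form $\mathcal M_i(t)\subseteq\mathcal N\setminus\{i\}$. The update is $$x_i(t+1)=\mathrm P_{\mathcal X_i}\Big[x_i(t)+\alpha\sum_{j\in\mathcal M_i(t)}(x_{ji}(t)-x_i(t))\Big],$$ with $\alpha>0$ and $\mathrm P_{\mathcal C}$ the Euclidean projection. Notation: - $\mathcal H_i=\mathcal H\setminus\{i\}$; - $\mathcal L_i(t)=\mathcal M_i(t)\cap\mathcal H_i$; - $\mathcal F_i(t)=\mathcal M_i(t)\setminus\mathcal L_i(t)$; - $\phi_i(t)=\big\langle x_i(t)-x^*,\sum_{j\in\mathcal M_i(t)}(x_i(t)-x_{ji}(t))\big\rangle$; - $\langle x,y\rangle=x^\top y$. *)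

theory Defs
  imports "HOL-Analysis.Analysis"
begin

text \<open>Conventions: time t :: nat; x t i is the state of agent i at time t;
 r t j i is the vector x_ji(t) received by agent i from agent j at time t;
 M t i is the set M_i(t) of retained senders.\<close>

definition Lset :: "nat set \<Rightarrow> (nat \<Rightarrow> nat \<Rightarrow> nat set) \<Rightarrow> nat \<Rightarrow> nat \<Rightarrow> nat set" where
  "Lset H M i t = M t i \<inter> (H - {i})"

definition Fset :: "nat set \<Rightarrow> (nat \<Rightarrow> nat \<Rightarrow> nat set) \<Rightarrow> nat \<Rightarrow> nat \<Rightarrow> nat set" where
  "Fset H M i t = M t i - Lset H M i t"

definition evec :: "nat set \<Rightarrow> (nat \<Rightarrow> nat \<Rightarrow> nat set) \<Rightarrow> (nat \<Rightarrow> nat \<Rightarrow> 'v::real_vector)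
    \<Rightarrow> (nat \<Rightarrow> nat \<Rightarrow> nat \<Rightarrow> 'v) \<Rightarrow> nat \<Rightarrow> nat \<Rightarrow> 'v" where
  "evec H M x r i t = (\<Sum>j\<in>Fset H M i t. x t i - r t j i)
                     - (\<Sum>j\<in>(H - {i}) - Lset H M i t. x t i - r t j i)"

definition Sval :: "nat set \<Rightarrow> (nat \<Rightarrow> nat \<Rightarrow> nat set) \<Rightarrow> (nat \<Rightarrow> nat \<Rightarrow> 'v::real_inner)
    \<Rightarrow> (nat \<Rightarrow> nat \<Rightarrow> nat \<Rightarrow> 'v) \<Rightarrow> 'v \<Rightarrow> nat \<Rightarrow> nat \<Rightarrow> real" where
  "Sval H M x r xs i t = (1/2) * (\<Sum>j\<in>H. (norm (x t i - x t j))\<^sup>2)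
                         + inner (x t i - xs) (evec H M x r i t)"

definition phi :: "(nat \<Rightarrow> nat \<Rightarrow> nat set) \<Rightarrow> (nat \<Rightarrow> nat \<Rightarrow> 'v::real_inner)
    \<Rightarrow> (nat \<Rightarrow> nat \<Rightarrow> nat \<Rightarrow> 'v) \<Rightarrow> 'v \<Rightarrow> nat \<Rightarrow> nat \<Rightarrow> real" where
  "phi M x r xs i t = inner (x t i - xs) (\<Sum>j\<in>M t i. x t i - r t j i)"

end

theory Submission
  imports Defs
begin

lemma pt_id: fixes u v :: "'v::real_inner"
  shows "inner (u - c) (u - v) = (1/2) * (norm (u - v))\<^sup>2 + (1/2) * ((norm (u - c))\<^sup>2 - (norm (v - c))\<^sup>2)"
  by (simp add: power2_norm_eq_inner algebra_simps inner_commute)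

lemma sym_id:
  fixes y :: "nat \<Rightarrow> 'v::real_inner"
  assumes "finite H"
  shows "(\<Sum>i\<in>H. inner (y i - c) (\<Sum>j\<in>H. y i - y j)) = (\<Sum>i\<in>H. (1/2) * (\<Sum>j\<in>H. (norm (y i - y j))\<^sup>2))"
proof -
  define g where "g i = (norm (y i - c))\<^sup>2" for i
  have "(\<Sum>i\<in>H. inner (y i - c) (\<Sum>j\<in>H. y i - y j)) = (\<Sum>i\<in>H. \<Sum>j\<in>H. inner (y i - c) (y i - y j))"
    by (simp add: inner_sum_right)
  also have "\<dots> = (\<Sum>i\<in>H. \<Sum>j\<in>H. (1/2) * (norm (y i - y j))\<^sup>2 + (1/2) * (g i - g j))"
    unfolding g_def by (simp add: pt_id)
  also have "\<dots> = (\<Sum>i\<in>H. (1/2) * (\<Sum>j\<in>H. (norm (y i - y j))\<^sup>2)) + (1/2) * (\<Sum>i\<in>H. \<Sum>j\<in>H. (g i - g j))"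
    by (simp add: sum.distrib sum_distrib_left)
  also have "(\<Sum>i\<in>H. \<Sum>j\<in>H. (g i - g j)) = 0"
  proof -
    have "(\<Sum>i\<in>H. \<Sum>j\<in>H. g i) = (\<Sum>i\<in>H. \<Sum>j\<in>H. g j)"
      by (rule sum.swap)
    then show ?thesis by (simp add: sum_subtractf)
  qed
  finally show ?thesis by simp
qed

lemma part1:
  fixes xi c :: "'v::real_inner" and y z :: "nat \<Rightarrow> 'v"
  assumes fD: "finite D" and fF: "finite Fi" and cd: "card Fi \<le> card D"
    and le: "\<forall>j\<in>Fi. \<forall>k\<in>D. norm (xi - z j) \<le> norm (xi - y k)"
  shows "(1/2) * (\<Sum>k\<in>D. (norm (xi - y k))\<^sup>2) + inner (xi - c) ((\<Sum>j\<in>Fi. xi - z j) - (\<Sum>k\<in>D. xi - y k))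
         \<ge> - 2 * (\<Sum>k\<in>D. (norm (xi - c))\<^sup>2)"
proof -
  define a where "a = norm (xi - c)"
  have a0: "a \<ge> 0" unfolding a_def by simp
  have A: "inner (xi - c) (\<Sum>j\<in>Fi. xi - z j) \<ge> - (\<Sum>k\<in>D. a * norm (xi - y k))"
  proof (cases "D = {}")
    case True
    then have "Fi = {}" using cd fF by simp
    then show ?thesis using True by simp
  next
    case False
    define d where "d = Min ((\<lambda>k. norm (xi - y k)) ` D)"
    have dle: "\<forall>k\<in>D. d \<le> norm (xi - y k)" unfolding d_def using fD by simp
    have led: "\<forall>j\<in>Fi. norm (xi - z j) \<le> d" unfolding d_def using fD False le by simp
    have "inner (xi - c) (\<Sum>j\<in>Fi. xi - z j) = (\<Sum>j\<in>Fi. inner (xi - c) (xi - z j))"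
      by (simp add: inner_sum_right)
    also have "\<dots> \<ge> (\<Sum>j\<in>Fi. - (a * d))"
    proof (rule sum_mono)
      fix j assume j: "j \<in> Fi"
      have "inner (xi - c) (xi - z j) \<ge> - (a * norm (xi - z j))"
        unfolding a_def using Cauchy_Schwarz_ineq2[of "xi - c" "xi - z j"] by linarith
      moreover have "a * norm (xi - z j) \<le> a * d" using led j a0 by (simp add: mult_left_mono)
      ultimately show "- (a * d) \<le> inner (xi - c) (xi - z j)" by linarith
    qed
    finally have 1: "inner (xi - c) (\<Sum>j\<in>Fi. xi - z j) \<ge> - (real (card Fi) * (a * d))" by simp
    have d0: "d \<ge> 0" unfolding d_def using fD False by simp
    have "real (card Fi) * (a * d) \<le> real (card D) * (a * d)"
      using cd a0 d0 by (simp add: mult_right_mono)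
    also have "\<dots> = (\<Sum>k\<in>D. a * d)" by simp
    also have "\<dots> \<le> (\<Sum>k\<in>D. a * norm (xi - y k))"
      by (rule sum_mono) (use dle a0 in \<open>simp add: mult_left_mono\<close>)
    finally show ?thesis using 1 by linarith
  qed
  have B: "- inner (xi - c) (\<Sum>k\<in>D. xi - y k) \<ge> - (\<Sum>k\<in>D. a * norm (xi - y k))"
  proof -
    have "inner (xi - c) (\<Sum>k\<in>D. xi - y k) = (\<Sum>k\<in>D. inner (xi - c) (xi - y k))"
      by (simp add: inner_sum_right)
    also have "\<dots> \<le> (\<Sum>k\<in>D. a * norm (xi - y k))"
      by (rule sum_mono) (unfold a_def, metis Cauchy_Schwarz_ineq2 abs_le_D1)
    finally show ?thesis by simp
  qed
  have C: "(\<Sum>k\<in>D. (1/2) * (norm (xi - y k))\<^sup>2 - 2 * (a * norm (xi - y k))) \<ge> (\<Sum>k\<in>D. - 2 * a\<^sup>2)"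
  proof (rule sum_mono)
    fix k
    have "0 \<le> (norm (xi - y k) - 2 * a)\<^sup>2" by simp
    then show "- 2 * a\<^sup>2 \<le> (1/2) * (norm (xi - y k))\<^sup>2 - 2 * (a * norm (xi - y k))"
      by (simp add: power2_eq_square algebra_simps)
  qed
  have E: "(\<Sum>k\<in>D. (1/2) * (norm (xi - y k))\<^sup>2 - 2 * (a * norm (xi - y k)))
     = (1/2) * (\<Sum>k\<in>D. (norm (xi - y k))\<^sup>2) - 2 * (\<Sum>k\<in>D. a * norm (xi - y k))"
    by (simp only: sum_subtractf sum_distrib_left)
  have F: "(\<Sum>k\<in>D. - 2 * a\<^sup>2) = - 2 * (\<Sum>k\<in>D. a\<^sup>2)" by (simp add: sum_distrib_left)
  have E2: "(\<Sum>k\<in>D. (1/2) * (norm (xi - y k))\<^sup>2) = (1/2) * (\<Sum>k\<in>D. (norm (xi - y k))\<^sup>2)"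
    by (simp add: sum_distrib_left)
  have G: "inner (xi - c) ((\<Sum>j\<in>Fi. xi - z j) - (\<Sum>k\<in>D. xi - y k))
     = inner (xi - c) (\<Sum>j\<in>Fi. xi - z j) - inner (xi - c) (\<Sum>k\<in>D. xi - y k)"
    by (rule inner_diff_right)
  show ?thesis unfolding a_def[symmetric] using A B C E F G by linarith
qed

theorem lemma2:
  fixes n f :: nat and H F :: "nat set" and X :: "nat \<Rightarrow> (real^'m) set"
    and xs :: "real^'m" and \<alpha> :: real
    and x :: "nat \<Rightarrow> nat \<Rightarrow> real^'m"
    and r :: "nat \<Rightarrow> nat \<Rightarrow> nat \<Rightarrow> real^'m"
    and M :: "nat \<Rightarrow> nat \<Rightarrow> nat set"
  assumes part: "H \<union> F = {1..n}" "H \<inter> F = {}" "card F \<le> f"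
    and closed: "\<forall>i\<in>H. closed (X i) \<and> convex (X i)"
    and inter: "(\<Inter>i\<in>H. X i) = {xs}"
    and alpha: "\<alpha> > 0"
    and honest: "\<forall>t. \<forall>i\<in>H. \<forall>j\<in>H - {i}. r t j i = x t j"
    and trim: "\<forall>t. \<forall>i\<in>H. M t i \<subseteq> {1..n} - {i}
                 \<and> card (({1..n} - {i}) - M t i) = f
                 \<and> (\<forall>j\<in>M t i. \<forall>k\<in>({1..n} - {i}) - M t i.
                       norm (x t i - r t j i) \<le> norm (x t i - r t k i))"
    and update: "\<forall>t. \<forall>i\<in>H. x (Suc t) i =
                   closest_point (X i) (x t i + \<alpha> *\<^sub>R (\<Sum>j\<in>M t i. r t j i - x t i))"
  shows "(\<forall>i\<in>H. \<forall>t. Sval H M x r xs i t \<ge>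
            (1/2) * (\<Sum>j\<in>Lset H M i t. (norm (x t i - x t j))\<^sup>2)
            - 2 * (\<Sum>j\<in>(H - {i}) - Lset H M i t. (norm (x t i - xs))\<^sup>2))
         \<and> (\<forall>t. (\<Sum>i\<in>H. phi M x r xs i t) = (\<Sum>i\<in>H. Sval H M x r xs i t))"
proof -
  have finH: "finite H" by (metis finite_Un finite_atLeastAtMost part(1))
  have finF: "finite F" by (metis finite_Un finite_atLeastAtMost part(1))
  have key: "Sval H M x r xs i t = (1/2) * (\<Sum>j\<in>Lset H M i t. (norm (x t i - x t j))\<^sup>2)
       + ((1/2) * (\<Sum>k\<in>(H - {i}) - Lset H M i t. (norm (x t i - x t k))\<^sup>2)
       + inner (x t i - xs) ((\<Sum>j\<in>Fset H M i t. x t i - r t j i) - (\<Sum>k\<in>(H - {i}) - Lset H M i t. x t i - x t k)))"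
    and phieq: "phi M x r xs i t = inner (x t i - xs) (\<Sum>j\<in>H. x t i - x t j) + inner (x t i - xs) (evec H M x r i t)"
    and cardle: "card (Fset H M i t) \<le> card ((H - {i}) - Lset H M i t)"
    and cmp: "\<forall>j\<in>Fset H M i t. \<forall>k\<in>(H - {i}) - Lset H M i t. norm (x t i - r t j i) \<le> norm (x t i - x t k)"
    and finFi: "finite (Fset H M i t)"
    if iH: "i \<in> H" for i t
  proof -
    define Mi where "Mi = M t i"
    define L where "L = Lset H M i t"
    define D where "D = (H - {i}) - L"
    define Fi where "Fi = Fset H M i t"
    have Msub: "Mi \<subseteq> {1..n} - {i}" and cardf: "card (({1..n} - {i}) - Mi) = f"
      and cmp0: "\<forall>j\<in>Mi. \<forall>k\<in>({1..n} - {i}) - Mi. norm (x t i - r t j i) \<le> norm (x t i - r t k i)"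
      using trim iH unfolding Mi_def by auto
    have iF: "i \<notin> F" using part(2) iH by auto
    have Leq: "L = Mi \<inter> (H - {i})" unfolding L_def Mi_def Lset_def by simp
    have Deq: "D = (H - {i}) - Mi" unfolding D_def Leq by auto
    have Fieq: "Fi = F \<inter> Mi" unfolding Fi_def Fset_def Lset_def Mi_def[symmetric]
      using Msub part(1,2) iF by auto
    have finMi: "finite Mi" using Msub finite_subset by blast
    have finD: "finite D" using finH Deq by simp
    have finFi': "finite Fi" using finF Fieq by simp
    have finL: "finite L" using finH Leq by simp
    have split1: "({1..n} - {i}) - Mi = D \<union> (F - Mi)" using part(1) Deq iF by auto
    have "f = card D + card (F - Mi)" using cardf split1 finD finF Deq
      by (metis card_Un_disjoint Diff_Int_distrib2 Diff_disjoint Diff_subset Int_Diff inf.orderE inf_commute part(2) finite_Diff)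
    moreover have "card F = card (F \<inter> Mi) + card (F - Mi)"
      using finF by (metis card_Int_Diff)
    ultimately have "card (F \<inter> Mi) \<le> card D" using part(3) by linarith
    then have cl: "card Fi \<le> card D" using Fieq by simp
    have cm: "\<forall>j\<in>Fi. \<forall>k\<in>D. norm (x t i - r t j i) \<le> norm (x t i - x t k)"
    proof (intro ballI)
      fix j k assume j: "j \<in> Fi" and k: "k \<in> D"
      have "k \<in> ({1..n} - {i}) - Mi" using split1 k by auto
      moreover have "j \<in> Mi" using j Fieq by auto
      moreover have "r t k i = x t k" using honest iH k Deq by auto
      ultimately show "norm (x t i - r t j i) \<le> norm (x t i - x t k)" using cmp0 by metis
    qed
    have HL: "H - {i} = L \<union> D" "L \<inter> D = {}" unfolding D_def using Leq by auto
    have sq: "(\<Sum>j\<in>H. (norm (x t i - x t j))\<^sup>2) = (\<Sum>j\<in>L. (norm (x t i - x t j))\<^sup>2) + (\<Sum>j\<in>D. (norm (x t i - x t j))\<^sup>2)"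
    proof -
      have "(\<Sum>j\<in>H. (norm (x t i - x t j))\<^sup>2) = (norm (x t i - x t i))\<^sup>2 + (\<Sum>j\<in>H - {i}. (norm (x t i - x t j))\<^sup>2)"
        using finH iH by (rule sum.remove)
      then show ?thesis using HL finL finD by (simp add: sum.union_disjoint)
    qed
    have sv: "(\<Sum>j\<in>H. x t i - x t j) = (\<Sum>j\<in>L. x t i - x t j) + (\<Sum>j\<in>D. x t i - x t j)"
    proof -
      have "(\<Sum>j\<in>H. x t i - x t j) = (x t i - x t i) + (\<Sum>j\<in>H - {i}. x t i - x t j)"
        using finH iH by (rule sum.remove)
      then show ?thesis using HL finL finD by (simp add: sum.union_disjoint)
    qed
    have rD: "(\<Sum>j\<in>D. x t i - r t j i) = (\<Sum>j\<in>D. x t i - x t j)"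
      by (rule sum.cong) (use honest iH Deq in auto)
    have rL: "(\<Sum>j\<in>L. x t i - r t j i) = (\<Sum>j\<in>L. x t i - x t j)"
      by (rule sum.cong) (use honest iH Leq in auto)
    have ev: "evec H M x r i t = (\<Sum>j\<in>Fi. x t i - r t j i) - (\<Sum>k\<in>D. x t i - x t k)"
      unfolding evec_def Fi_def[symmetric] L_def[symmetric] D_def[symmetric] using rD by simp
    have MLF: "Mi = L \<union> Fi" "L \<inter> Fi = {}" unfolding Fi_def Fset_def L_def Mi_def using Lset_def by auto
    have sM: "(\<Sum>j\<in>Mi. x t i - r t j i) = (\<Sum>j\<in>L. x t i - r t j i) + (\<Sum>j\<in>Fi. x t i - r t j i)"
      using MLF finL finFi' by (simp add: sum.union_disjoint)
    show "Sval H M x r xs i t = (1/2) * (\<Sum>j\<in>Lset H M i t. (norm (x t i - x t j))\<^sup>2)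
       + ((1/2) * (\<Sum>k\<in>(H - {i}) - Lset H M i t. (norm (x t i - x t k))\<^sup>2)
       + inner (x t i - xs) ((\<Sum>j\<in>Fset H M i t. x t i - r t j i) - (\<Sum>k\<in>(H - {i}) - Lset H M i t. x t i - x t k)))"
      unfolding Sval_def ev sq Fi_def[symmetric] L_def[symmetric] D_def[symmetric] by (simp add: algebra_simps)
    show "phi M x r xs i t = inner (x t i - xs) (\<Sum>j\<in>H. x t i - x t j) + inner (x t i - xs) (evec H M x r i t)"
      unfolding phi_def Mi_def[symmetric] sM rL ev sv inner_add_right[symmetric] by (simp add: algebra_simps)
    show "card (Fset H M i t) \<le> card ((H - {i}) - Lset H M i t)" using cl unfolding Fi_def D_def L_def .
    show "\<forall>j\<in>Fset H M i t. \<forall>k\<in>(H - {i}) - Lset H M i t. norm (x t i - r t j i) \<le> norm (x t i - x t k)"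
      using cm unfolding Fi_def D_def L_def .
    show "finite (Fset H M i t)" using finFi' unfolding Fi_def .
  qed
  show ?thesis
  proof (intro conjI ballI allI)
    fix i t assume iH: "i \<in> H"
    have fD: "finite ((H - {i}) - Lset H M i t)" using finH by simp
    have "- 2 * (\<Sum>k\<in>(H - {i}) - Lset H M i t. (norm (x t i - xs))\<^sup>2)
        \<le> (1/2) * (\<Sum>k\<in>(H - {i}) - Lset H M i t. (norm (x t i - x t k))\<^sup>2)
       + inner (x t i - xs) ((\<Sum>j\<in>Fset H M i t. x t i - r t j i) - (\<Sum>k\<in>(H - {i}) - Lset H M i t. x t i - x t k))"
      by (rule part1[OF fD finFi[OF iH] cardle[OF iH] cmp[OF iH]])
    then show "Sval H M x r xs i t \<ge>
            (1/2) * (\<Sum>j\<in>Lset H M i t. (norm (x t i - x t j))\<^sup>2)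
            - 2 * (\<Sum>j\<in>(H - {i}) - Lset H M i t. (norm (x t i - xs))\<^sup>2)"
      using key[OF iH, of t] by linarith
  next
    fix t
    have "(\<Sum>i\<in>H. phi M x r xs i t) = (\<Sum>i\<in>H. inner (x t i - xs) (\<Sum>j\<in>H. x t i - x t j)) + (\<Sum>i\<in>H. inner (x t i - xs) (evec H M x r i t))"
      using phieq by (simp add: sum.distrib)
    also have "\<dots> = (\<Sum>i\<in>H. Sval H M x r xs i t)"
      unfolding sym_id[OF finH] Sval_def by (simp add: sum.distrib)
    finally show "(\<Sum>i\<in>H. phi M x r xs i t) = (\<Sum>i\<in>H. Sval H M x r xs i t)" .
  qed
qed

end
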